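(* Let $S$ be a finite alphabet and $X \subset S^{\mathbb{Z}}$ a subshift. For all words $u, v \in S^*$, if $C_X(u) = C_X(v)$, then $C_{X^{(1)}}(u) = C_{X^{(1)}}(v)$.
   Context: A subshift $X \subset S^{\mathbb{Z}}$ is a closed, shift-invariant subset of $S^{\mathbb{Z}}$ (product topology, $S$ discrete). A word $w$ occurs in $X$, written $w \sqsubset X$, if it appears as a contiguous subword of some configuration of $X$. The context of a word $v \in S^*$ in $X$ is $C_X(v) = \{(w,w') \in (S^* )^2 \mid wvw' \sqsubset X\}$. The Cantor–Bendixson derivative $X^{(1)} = X'$ is the set of non-isolated points of $X$, i.e. $X' = \{x \in X \mid x \in \overline{X \setminus \{x\}}\}$; it is again a subshift. *)

theory Defs
  imports "HOL-Analysis.Analysis"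
begin

definition fullshift_top :: "'s set \<Rightarrow> (int \<Rightarrow> 's) topology" where
  "fullshift_top S = product_topology (\<lambda>_. discrete_topology S) UNIV"

definition shift :: "(int \<Rightarrow> 's) \<Rightarrow> (int \<Rightarrow> 's)" where
  "shift x = (\<lambda>i. x (i + 1))"

definition subshift :: "'s set \<Rightarrow> (int \<Rightarrow> 's) set \<Rightarrow> bool" where
  "subshift S X \<longleftrightarrow> X \<subseteq> topspace (fullshift_top S) \<and>
     closedin (fullshift_top S) X \<and> shift ` X = X"

definition occurs :: "'s list \<Rightarrow> (int \<Rightarrow> 's) set \<Rightarrow> bool" where
  "occurs w X \<longleftrightarrow> (\<exists>x\<in>X. \<exists>i::int. \<forall>k<length w. x (i + int k) = w ! k)"

definition ctx_of :: "'s set \<Rightarrow> (int \<Rightarrow> 's) set \<Rightarrow> 's list \<Rightarrow> ('s list \<times> 's list) set" where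
  "ctx_of S X v = {(w, w'). set w \<subseteq> S \<and> set w' \<subseteq> S \<and> occurs (w @ v @ w') X}"

definition CB_deriv :: "'s set \<Rightarrow> (int \<Rightarrow> 's) set \<Rightarrow> (int \<Rightarrow> 's) set" where
  "CB_deriv S X = {x \<in> X. x \<in> fullshift_top S closure_of (X - {x})}"

end

theory Submission
  imports Defs
begin

definition atw :: "(int \<Rightarrow> 's) \<Rightarrow> int \<Rightarrow> 's list \<Rightarrow> bool" where
  "atw z q w \<longleftrightarrow> (\<forall>k<length w. z (q + int k) = w ! k)"

lemma at_append: "atw z q (w1 @ w2) \<longleftrightarrow> atw z q w1 \<and> atw z (q + int (length w1)) w2"
proof
  assume h: "atw z q (w1 @ w2)"
  show "atw z q w1 \<and> atw z (q + int (length w1)) w2"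
  proof
    show "atw z q w1" unfolding atw_def
    proof (intro allI impI)
      fix k assume "k < length w1"
      with h show "z (q + int k) = w1 ! k" unfolding atw_def
        by (metis length_append nth_append trans_less_add1)
    qed
    show "atw z (q + int (length w1)) w2" unfolding atw_def
    proof (intro allI impI)
      fix k assume "k < length w2"
      with h[unfolded atw_def, rule_format, of "length w1 + k"]
      show "z (q + int (length w1) + int k) = w2 ! k"
        by (simp add: nth_append add.assoc)
    qed
  qed
next
  assume h: "atw z q w1 \<and> atw z (q + int (length w1)) w2"
  show "atw z q (w1 @ w2)" unfolding atw_def
  proof (intro allI impI)
    fix k assume k: "k < length (w1 @ w2)"
    show "z (q + int k) = (w1 @ w2) ! k"
    proof (cases "k < length w1")
      case True then show ?thesis using h by (simp add: atw_def nth_append)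
    next
      case False
      then obtain k' where "k = length w1 + k'" by (metis le_Suc_ex not_less)
      then show ?thesis using h k by (simp add: atw_def nth_append add.assoc)
    qed
  qed
qed

lemma at_eq: "atw z q w1 \<Longrightarrow> atw z q w2 \<Longrightarrow> length w1 = length w2 \<Longrightarrow> w1 = w2"
  unfolding atw_def by (metis nth_equalityI)

lemma at_map: "atw z q (map (\<lambda>k. z (q + int k)) [0..<m])"
  unfolding atw_def by simp

lemma at_nth: "atw z q w \<Longrightarrow> q \<le> j \<Longrightarrow> j < q + int (length w) \<Longrightarrow> z j = w ! nat (j - q)"
proof -
  assume a: "atw z q w" "q \<le> j" "j < q + int (length w)"
  have "nat (j - q) < length w" using a(2,3) by linarith
  moreover have "q + int (nat (j - q)) = j" using a(2) by simp
  ultimately show ?thesis using a(1) unfolding atw_def by metis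
qed

lemma topspace_fs: "topspace (fullshift_top S) = {x. \<forall>i. x i \<in> S}"
  unfolding fullshift_top_def by (auto simp: PiE_iff)

lemma shift_nat: assumes "subshift S X" "z \<in> X" shows "(\<lambda>j. z (j + int n)) \<in> X"
proof (induction n)
  case 0 then show ?case using assms by simp
next
  case (Suc n)
  have eq: "shift ` X = X" using assms(1) unfolding subshift_def by simp
  have "shift (\<lambda>j. z (j + int n)) \<in> shift ` X" using Suc by (rule imageI)
  then have "shift (\<lambda>j. z (j + int n)) \<in> X" using eq by simp
  moreover have "shift (\<lambda>j. z (j + int n)) = (\<lambda>j. z (j + int (Suc n)))"
    unfolding shift_def by (simp add: add.assoc)
  ultimately show ?case by simp
qed

lemma shift_neg: assumes "subshift S X" "z \<in> X" shows "(\<lambda>j. z (j - int n)) \<in> X"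
proof (induction n)
  case 0 then show ?case using assms by simp
next
  case (Suc n)
  have eq: "X = shift ` X" using assms(1) unfolding subshift_def by simp
  have "(\<lambda>j. z (j - int n)) \<in> shift ` X" using Suc eq by blast
  then obtain w0 where w0: "w0 \<in> X" "(\<lambda>j. z (j - int n)) = shift w0" by blast
  have "w0 = (\<lambda>j. z (j - int (Suc n)))"
  proof
    fix j
    have "w0 j = shift w0 (j - 1)" unfolding shift_def by simp
    also have "\<dots> = z (j - 1 - int n)" using fun_cong[OF w0(2), of "j - 1"] by simp
    also have "j - 1 - int n = j - int (Suc n)" by simp
    finally show "w0 j = z (j - int (Suc n))" .
  qed
  then show ?case using w0 by simp
qed

lemma shift_int: assumes "subshift S X" "z \<in> X" shows "(\<lambda>j. z (j + d)) \<in> X"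
proof (cases "d \<ge> 0")
  case True
  then show ?thesis using shift_nat[OF assms, of "nat d"] by simp
next
  case False
  then show ?thesis using shift_neg[OF assms, of "nat (-d)"] by simp
qed

lemma occurs_at: assumes "subshift S X" "occurs w X" shows "\<exists>z\<in>X. atw z q w"
proof -
  obtain z t where z: "z \<in> X" "\<forall>k<length w. z (t + int k) = w ! k"
    using assms(2) unfolding occurs_def by blast
  have "(\<lambda>j. z (j + (t - q))) \<in> X" by (rule shift_int[OF assms(1) z(1)])
  moreover have "atw (\<lambda>j. z (j + (t - q))) q w" unfolding atw_def
  proof (intro allI impI)
    fix k assume k: "k < length w"
    have "q + int k + (t - q) = t + int k" by simp
    then show "z (q + int k + (t - q)) = w ! k" using z(2) k by metis
  qed
  ultimately show ?thesis by blast
qed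

lemma cyl_nbhd:
  assumes "openin (fullshift_top S) U" "y \<in> U"
  shows "\<exists>n::nat. \<forall>z. (\<forall>i. z i \<in> S) \<longrightarrow> (\<forall>j. \<bar>j\<bar> \<le> int n \<longrightarrow> z j = y j) \<longrightarrow> z \<in> U"
proof -
  obtain Uf where Uf: "finite {i. Uf i \<noteq> S}" "\<forall>i. Uf i \<subseteq> S"
     "y \<in> Pi\<^sub>E UNIV Uf" "Pi\<^sub>E UNIV Uf \<subseteq> U"
    using assms unfolding fullshift_top_def openin_product_topology_alt by force
  define F where "F = {i. Uf i \<noteq> S}"
  define n where "n = nat (\<Sum>i\<in>F. \<bar>i\<bar>)"
  have bound: "\<bar>i\<bar> \<le> int n" if "i \<in> F" for i
  proof -
    have "\<bar>i\<bar> \<le> (\<Sum>i\<in>F. \<bar>i\<bar>)" using that Uf(1) unfolding F_def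
      by (intro member_le_sum) auto
    then show ?thesis unfolding n_def by simp
  qed
  show ?thesis
  proof (intro exI allI impI)
    fix z :: "int \<Rightarrow> 'a" assume zS: "\<forall>i. z i \<in> S" and ag: "\<forall>j. \<bar>j\<bar> \<le> int n \<longrightarrow> z j = y j"
    have "z \<in> Pi\<^sub>E UNIV Uf"
    proof (simp add: PiE_iff, intro allI)
      fix i show "z i \<in> Uf i"
      proof (cases "i \<in> F")
        case True then show ?thesis using ag bound Uf(3) by (simp add: PiE_iff)
      next
        case False then show ?thesis using zS unfolding F_def by simp
      qed
    qed
    then show "z \<in> U" using Uf(4) by blast
  qed
qed

lemma cyl_open:
  assumes "\<forall>i. y i \<in> S"
  shows "openin (fullshift_top S) {z. (\<forall>i. z i \<in> S) \<and> (\<forall>j. \<bar>j\<bar> \<le> int n \<longrightarrow> z j = y j)}"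
  unfolding fullshift_top_def openin_product_topology_alt
proof (intro ballI)
  fix z assume z: "z \<in> {z. (\<forall>i. z i \<in> S) \<and> (\<forall>j. \<bar>j\<bar> \<le> int n \<longrightarrow> z j = y j)}"
  define U where "U = (\<lambda>i. if \<bar>i\<bar> \<le> int n then {y i} else S)"
  have f1: "finite {i \<in> UNIV. U i \<noteq> topspace (discrete_topology S)}"
    by (rule finite_subset[of _ "{-int n..int n}"]) (auto simp: U_def split: if_splits)
  have f2: "\<forall>i\<in>UNIV. openin (discrete_topology S) (U i)" using assms by (simp add: U_def)
  have f3: "z \<in> Pi\<^sub>E UNIV U" using z by (auto simp: U_def PiE_iff)
  have f4: "Pi\<^sub>E UNIV U \<subseteq> {z. (\<forall>i. z i \<in> S) \<and> (\<forall>j. \<bar>j\<bar> \<le> int n \<longrightarrow> z j = y j)}"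
  proof
    fix z' assume "z' \<in> Pi\<^sub>E UNIV U"
    then have h: "\<And>i. z' i \<in> U i" by (simp add: PiE_iff)
    have "\<forall>i. z' i \<in> S"
    proof
      fix i show "z' i \<in> S" using h[of i] assms by (cases "\<bar>i\<bar> \<le> int n") (auto simp: U_def)
    qed
    moreover have "\<forall>j. \<bar>j\<bar> \<le> int n \<longrightarrow> z' j = y j"
    proof (intro allI impI)
      fix j assume "\<bar>j\<bar> \<le> int n" then show "z' j = y j" using h[of j] by (simp add: U_def)
    qed
    ultimately show "z' \<in> {z. (\<forall>i. z i \<in> S) \<and> (\<forall>j. \<bar>j\<bar> \<le> int n \<longrightarrow> z j = y j)}" by simp
  qed
  show "\<exists>U. finite {i \<in> UNIV. U i \<noteq> topspace (discrete_topology S)} \<and>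
        (\<forall>i\<in>UNIV. openin (discrete_topology S) (U i)) \<and> z \<in> Pi\<^sub>E UNIV U \<and>
        Pi\<^sub>E UNIV U \<subseteq> {z. (\<forall>i. z i \<in> S) \<and> (\<forall>j. \<bar>j\<bar> \<le> int n \<longrightarrow> z j = y j)}"
    using f1 f2 f3 f4 by (intro exI[of _ U] conjI)
qed

lemma closure_mem:
  assumes "\<forall>i. y i \<in> S" "\<forall>n::nat. \<exists>z\<in>T. (\<forall>i. z i \<in> S) \<and> (\<forall>j. \<bar>j\<bar> \<le> int n \<longrightarrow> z j = y j)"
  shows "y \<in> fullshift_top S closure_of T"
  unfolding in_closure_of
proof (intro conjI allI impI)
  show "y \<in> topspace (fullshift_top S)" using assms(1) by (simp add: topspace_fs)
  fix U assume "y \<in> U \<and> openin (fullshift_top S) U"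
  then obtain n where n: "\<forall>z. (\<forall>i. z i \<in> S) \<longrightarrow> (\<forall>j. \<bar>j\<bar> \<le> int n \<longrightarrow> z j = y j) \<longrightarrow> z \<in> U"
    using cyl_nbhd[of S U y] by blast
  obtain z where z: "z \<in> T" "\<forall>i. z i \<in> S" "\<forall>j. \<bar>j\<bar> \<le> int n \<longrightarrow> z j = y j"
    using assms(2) by blast
  have "z \<in> U" using n z(2,3) by blast
  then show "\<exists>z. z \<in> T \<and> z \<in> U" using z(1) by blast
qed

lemma deriv_near:
  assumes "x \<in> CB_deriv S X" "subshift S X"
  shows "\<exists>x'\<in>X. x' \<noteq> x \<and> (\<forall>j. \<bar>j\<bar> \<le> int n \<longrightarrow> x' j = x j)"
proof -
  have xc: "x \<in> fullshift_top S closure_of (X - {x})" and xX: "x \<in> X"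
    using assms(1) unfolding CB_deriv_def by auto
  have xS: "\<forall>i. x i \<in> S" using xX assms(2) unfolding subshift_def topspace_fs by blast
  define C where "C = {z. (\<forall>i. z i \<in> S) \<and> (\<forall>j. \<bar>j\<bar> \<le> int n \<longrightarrow> z j = x j)}"
  have "openin (fullshift_top S) C" unfolding C_def by (rule cyl_open[OF xS])
  moreover have "x \<in> C" using xS by (simp add: C_def)
  ultimately obtain z where "z \<in> X - {x}" "z \<in> C" using xc unfolding in_closure_of by meson
  then show ?thesis unfolding C_def by blast
qed

lemma occurs_atw: "occurs w X \<longleftrightarrow> (\<exists>z\<in>X. \<exists>q. atw z q w)"
  unfolding occurs_def atw_def by blast

lemma window:
  fixes x x'' z :: "int \<Rightarrow> 's"
  assumes za: "atw z (p - int m') (a @ v @ b)"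
    and ad: "a = map (\<lambda>k. x'' (p - int m' + int k)) [0..<m']"
    and bd: "b = map (\<lambda>k. x'' (p + int (length u) + int k)) [0..<m']"
    and mm: "m \<le> m'"
    and ag: "\<forall>j. p - int m \<le> j \<and> j < p + int (length u) + int m \<longrightarrow> x'' j = x j"
    and j1: "p - int m \<le> j" and j2: "j < p + int (length v) + int m"
  shows "z j = (if j < p then x j else if j < p + int (length v) then v ! nat (j - p)
               else x (j - int (length v) + int (length u)))"
proof -
  have la: "length a = m'" "length b = m'" using ad bd by auto
  have A: "atw z (p - int m') a" and V: "atw z p v" and B: "atw z (p + int (length v)) b"
    using za la by (auto simp: at_append)
  show ?thesis
  proof (cases "j < p")
    case True
    have "z j = a ! nat (j - (p - int m'))" using at_nth[OF A] True j1 mm la by auto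
    also have "\<dots> = x'' j" using True j1 mm ad by auto
    also have "\<dots> = x j" using ag True j1 by auto
    finally show ?thesis using True by simp
  next
    case False
    show ?thesis
    proof (cases "j < p + int (length v)")
      case True
      then show ?thesis using at_nth[OF V] False by auto
    next
      case F2: False
      have "z j = b ! nat (j - (p + int (length v)))" using at_nth[OF B] F2 j2 mm la by auto
      also have "\<dots> = x'' (j - int (length v) + int (length u))" using F2 j2 mm bd by (auto simp: add.commute)
      also have "\<dots> = x (j - int (length v) + int (length u))" using ag F2 j2 by auto
      finally show ?thesis using False F2 by simp
    qed
  qed
qed

lemma main:
  fixes S :: "'s set" and X :: "(int \<Rightarrow> 's) set" and u v :: "'s list"
  assumes sub: "subshift S X" and vS: "set v \<subseteq> S"
    and cx: "ctx_of S X u \<subseteq> ctx_of S X v"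
    and ww: "(w, w') \<in> ctx_of S (CB_deriv S X) u"
  shows "(w, w') \<in> ctx_of S (CB_deriv S X) v"
proof -
  have wS: "set w \<subseteq> S" "set w' \<subseteq> S" using ww unfolding ctx_of_def by auto
  obtain x i where xD: "x \<in> CB_deriv S X" and xa: "atw x i (w @ u @ w')"
    using ww unfolding ctx_of_def occurs_atw by auto
  have xX: "x \<in> X" using xD unfolding CB_deriv_def by auto
  have XS: "\<And>z j. z \<in> X \<Longrightarrow> z j \<in> S" using sub unfolding subshift_def topspace_fs by blast
  have xS: "\<And>j. x j \<in> S" using XS[OF xX] .
  define p where "p = i + int (length w)"
  define lu where "lu = int (length u)"
  define lv where "lv = int (length v)"
  have xu: "atw x p u" and xw: "atw x i w" and xw': "atw x (p + lu) w'"
    using xa unfolding p_def lu_def by (auto simp: at_append add.assoc)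
  define y where "y = (\<lambda>j. if j < p then x j else if j < p + lv then v ! nat (j - p)
               else x (j - lv + lu))"
  have yS: "\<forall>j. y j \<in> S"
  proof
    fix j
    show "y j \<in> S"
    proof (cases "j < p \<or> \<not> j < p + lv")
      case True then show ?thesis using xS unfolding y_def by auto
    next
      case False
      then have "nat (j - p) < length v" unfolding lv_def by linarith
      then have "v ! nat (j - p) \<in> S" using vS nth_mem by blast
      then show ?thesis using False unfolding y_def by auto
    qed
  qed
  have ya: "atw y i (w @ v @ w')"
  proof -
    have "atw y i w" using xw unfolding atw_def y_def p_def by auto
    moreover have "atw y p v" unfolding atw_def y_def lv_def by auto
    moreover have "atw y (p + lv) w'" using xw' unfolding atw_def y_def lv_def
      by (auto simp: algebra_simps)
    ultimately show ?thesis unfolding p_def lv_def by (simp add: at_append)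
  qed
  have getz: "\<exists>z\<in>X. atw z (p - int m') (a @ v @ b)"
    if x''X: "x'' \<in> X" and x''u: "atw x'' p u"
      and ad: "a = map (\<lambda>k. x'' (p - int m' + int k)) [0..<m']"
      and bd: "b = map (\<lambda>k. x'' (p + int (length u) + int k)) [0..<m']" for x'' m' a b
  proof -
    have "atw x'' (p - int m') (a @ u @ b)"
      using x''u ad bd by (simp add: at_append at_map)
    then have "occurs (a @ u @ b) X" using x''X unfolding occurs_atw by blast
    moreover have "set a \<subseteq> S" "set b \<subseteq> S" using ad bd XS[OF x''X] by auto
    ultimately have "(a, b) \<in> ctx_of S X u" unfolding ctx_of_def by auto
    then have "(a, b) \<in> ctx_of S X v" using cx by blast
    then have "occurs (a @ v @ b) X" unfolding ctx_of_def by auto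
    then show ?thesis using occurs_at[OF sub] by blast
  qed
  have win: "\<forall>j. \<bar>j\<bar> \<le> int n \<longrightarrow> p - int (n + nat \<bar>p\<bar> + 1) \<le> j \<and>
      j < p + lv + int (n + nat \<bar>p\<bar> + 1)" for n
    unfolding lv_def by auto
  have yX: "y \<in> X"
  proof -
    have "y \<in> fullshift_top S closure_of X"
    proof (rule closure_mem[OF yS], intro allI)
      fix n :: nat
      define m where "m = n + nat \<bar>p\<bar> + 1"
      define a where "a = map (\<lambda>k. x (p - int m + int k)) [0..<m]"
      define b where "b = map (\<lambda>k. x (p + int (length u) + int k)) [0..<m]"
      obtain z where z: "z \<in> X" "atw z (p - int m) (a @ v @ b)"
        using getz[OF xX xu a_def b_def] by blast
      have "\<forall>j. \<bar>j\<bar> \<le> int n \<longrightarrow> z j = y j"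
      proof (intro allI impI)
        fix j assume "\<bar>j\<bar> \<le> int n"
        then have "p - int m \<le> j" "j < p + int (length v) + int m"
          using win[of n] unfolding m_def lv_def by auto
        from window[OF z(2) a_def b_def order_refl _ this]
        show "z j = y j" unfolding y_def lv_def lu_def by auto
      qed
      then show "\<exists>z\<in>X. (\<forall>i. z i \<in> S) \<and> (\<forall>j. \<bar>j\<bar> \<le> int n \<longrightarrow> z j = y j)"
        using z XS by blast
    qed
    moreover have "closedin (fullshift_top S) X" using sub unfolding subshift_def by blast
    ultimately show ?thesis by (simp add: closure_of_closedin)
  qed
  have yD: "y \<in> CB_deriv S X"
  proof -
    have "y \<in> fullshift_top S closure_of (X - {y})"
    proof (rule closure_mem[OF yS], intro allI)
      fix n :: nat
      define m where "m = n + nat \<bar>p\<bar> + 1"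
      define R where "R = nat \<bar>p\<bar> + m + length u + 1"
      obtain x' where x': "x' \<in> X" "x' \<noteq> x" "\<forall>j. \<bar>j\<bar> \<le> int R \<longrightarrow> x' j = x j"
        using deriv_near[OF xD sub] by blast
      obtain j0 where j0: "x' j0 \<noteq> x j0" using x'(2) by blast
      define m' where "m' = m + nat \<bar>j0\<bar> + nat \<bar>p\<bar> + 1"
      have agR: "\<forall>j. p - int m \<le> j \<and> j < p + int (length u) + int m \<longrightarrow> x' j = x j"
        using x'(3) unfolding R_def by auto
      have x'u: "atw x' p u" using xu agR unfolding atw_def by auto
      define a1 where "a1 = map (\<lambda>k. x (p - int m' + int k)) [0..<m']"
      define b1 where "b1 = map (\<lambda>k. x (p + int (length u) + int k)) [0..<m']"
      define a2 where "a2 = map (\<lambda>k. x' (p - int m' + int k)) [0..<m']"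
      define b2 where "b2 = map (\<lambda>k. x' (p + int (length u) + int k)) [0..<m']"
      have W1: "atw x (p - int m') (a1 @ u @ b1)" using xu by (simp add: a1_def b1_def at_append at_map)
      have W2: "atw x' (p - int m') (a2 @ u @ b2)" using x'u by (simp add: a2_def b2_def at_append at_map)
      have neq: "a1 @ u @ b1 \<noteq> a2 @ u @ b2"
      proof
        assume e: "a1 @ u @ b1 = a2 @ u @ b2"
        have r1: "p - int m' \<le> j0" "j0 < p - int m' + int (length (a1 @ u @ b1))"
          unfolding m'_def a1_def b1_def by auto
        have "x j0 = x' j0" using at_nth[OF W1 r1] at_nth[OF W2] r1 e by simp
        then show False using j0 by simp
      qed
      obtain z1 where z1: "z1 \<in> X" "atw z1 (p - int m') (a1 @ v @ b1)"
        using getz[OF xX xu a1_def b1_def] by blast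
      obtain z2 where z2: "z2 \<in> X" "atw z2 (p - int m') (a2 @ v @ b2)"
        using getz[OF x'(1) x'u a2_def b2_def] by blast
      have zne: "z1 \<noteq> z2"
      proof
        assume "z1 = z2"
        then have "a1 @ v @ b1 = a2 @ v @ b2"
          using at_eq[OF z1(2)] z2(2) by (simp add: a1_def a2_def b1_def b2_def)
        moreover have "length a1 = length a2" "length b1 = length b2"
          by (simp_all add: a1_def a2_def b1_def b2_def)
        ultimately show False using neq by simp
      qed
      have mm: "m \<le> m'" unfolding m'_def by simp
      have agx: "\<forall>j. p - int m \<le> j \<and> j < p + int (length u) + int m \<longrightarrow> x j = x j" by simp
      have zy: "\<forall>j. \<bar>j\<bar> \<le> int n \<longrightarrow> zz j = y j"
        if "zz = z1 \<or> zz = z2" for zz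
      proof (intro allI impI)
        fix j assume "\<bar>j\<bar> \<le> int n"
        then have jj: "p - int m \<le> j" "j < p + int (length v) + int m"
          using win[of n] unfolding m_def lv_def by auto
        show "zz j = y j"
          using that window[OF z1(2) a1_def b1_def mm agx jj]
            window[OF z2(2) a2_def b2_def mm agR jj]
          unfolding y_def lv_def lu_def by auto
      qed
      have "(z1 \<noteq> y) \<or> (z2 \<noteq> y)" using zne by blast
      then show "\<exists>z\<in>X - {y}. (\<forall>i. z i \<in> S) \<and> (\<forall>j. \<bar>j\<bar> \<le> int n \<longrightarrow> z j = y j)"
        using zy z1(1) z2(1) XS by blast
    qed
    then show ?thesis using yX unfolding CB_deriv_def by blast
  qed
  have "occurs (w @ v @ w') (CB_deriv S X)" using yD ya unfolding occurs_atw by blast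
  then show ?thesis using wS unfolding ctx_of_def by auto
qed

theorem lemma3:
  fixes S :: "'s set" and X :: "(int \<Rightarrow> 's) set" and u v :: "'s list"
  assumes "finite S"
    and "subshift S X"
    and "set u \<subseteq> S" and "set v \<subseteq> S"
    and "ctx_of S X u = ctx_of S X v"
  shows "ctx_of S (CB_deriv S X) u = ctx_of S (CB_deriv S X) v"
proof
  show "ctx_of S (CB_deriv S X) u \<subseteq> ctx_of S (CB_deriv S X) v"
    using main[OF assms(2) assms(4)] assms(5) by auto
  show "ctx_of S (CB_deriv S X) v \<subseteq> ctx_of S (CB_deriv S X) u"
    using main[OF assms(2) assms(3)] assms(5) by auto
qed

end
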